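(* Let $M$ be a monotone triangle with $n$ rows and strictly increasing bottom row. Then the sum of the weights $\mathrm{W}(A)$ over all arrowed monotone triangles $A$ whose underlying monotone triangle (forgetting decorations) is $M$ equals $\prod_{i=1}^n(uX_i+vX_i^{-1}+w)\cdot\mathrm{W}_0(M)$.
   Context: Monotone triangle: array $(m_{i,j})_{1\le j\le i\le n}$ of integers with $m_{i+1,j}\le m_{i,j}\le m_{i+1,j+1}$, $m_{i,j}<m_{i,j+1}$. Northwest/northeast-neighbours of $m_{i,j}$: $m_{i-1,j-1}$, $m_{i-1,j}$. An arrowed monotone triangle decorates every entry by one of $\nwarrow,\nearrow,\nwarrow\!\nearrow$ such that an entry equal to its northwest-neighbour carries $\nearrow$ and an entry equal to its northeast-neighbour carries $\nwarrow$; its weight is $\mathrm{W}(A)=u^{\#\nearrow}v^{\#\nwarrow}w^{\#\nwarrow\nearrow}\prod_iX_i^{(\text{sum of row }i)-(\text{sum of row }i-1)+(\#\nearrow\text{ in row }i)-(\#\nwarrow\text{ in row }i)}$ (sum of row $0$ is $0$). For $M$, an entry $m_{i,j}$ with $i<n$ is special if $m_{i+1,j}<m_{i,j}<m_{i+1,j+1}$, left-leaning if $m_{i,j}=m_{i+1,j}$, right-leaning if $m_{i,j}=m_{i+1,j+1}$; $s_i,l_i,r_i$ count these in row $i$, $s_0=l_0=r_0=0$, $l(M)=\sum l_i$, $r(M)=\sum r_i$, $d_i(M)=\sum_j m_{i,j}-\sum_j m_{i-1,j}+r_{i-1}-l_{i-1}$, and $\mathrm{W}_0(M)=u^{r(M)}v^{l(M)}\prod_iX_i^{d_i(M)}(w+uX_i+vX_i^{-1})^{s_{i-1}(M)}$.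 *)

theory Defs
  imports Main
begin

text \<open>A triangle is a function m :: nat => nat => int; entry (i,j) with 1 <= j <= i <= n.\<close>

definition monotone_triangle :: "nat \<Rightarrow> (nat \<Rightarrow> nat \<Rightarrow> int) \<Rightarrow> bool" where
  "monotone_triangle n m \<longleftrightarrow>
     (\<forall>i j. 1 \<le> j \<and> j < i \<and> i \<le> n \<longrightarrow> m i j < m i (j+1)) \<and>
     (\<forall>i j. 1 \<le> j \<and> j \<le> i \<and> i < n \<longrightarrow> m (i+1) j \<le> m i j \<and> m i j \<le> m (i+1) (j+1))"

datatype arrow = NW | NE | NWNE

text \<open>Decorations: NW = nwarrow, NE = nearrow, NWNE = both.
  Northwest neighbour of (i,j) is (i-1,j-1) (exists iff j >= 2), northeast neighbour is (i-1,j) (exists iff j <= i-1).\<close>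

definition arrow_compatible :: "nat \<Rightarrow> (nat \<Rightarrow> nat \<Rightarrow> int) \<Rightarrow> (nat \<Rightarrow> nat \<Rightarrow> arrow) \<Rightarrow> bool" where
  "arrow_compatible n m d \<longleftrightarrow>
     (\<forall>i j. 1 \<le> j \<and> j \<le> i \<and> i \<le> n \<longrightarrow>
        (2 \<le> j \<and> m i j = m (i-1) (j-1) \<longrightarrow> d i j = NE) \<and>
        (j + 1 \<le> i \<and> m i j = m (i-1) j \<longrightarrow> d i j = NW))"

text \<open>Arrowed monotone triangles with underlying triangle m: decorations on the index range,
  normalised to NWNE outside it (so that they are in bijection with decorations of the entries).\<close>
definition arrowings :: "nat \<Rightarrow> (nat \<Rightarrow> nat \<Rightarrow> int) \<Rightarrow> (nat \<Rightarrow> nat \<Rightarrow> arrow) set" where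
  "arrowings n m = {d. arrow_compatible n m d \<and>
      (\<forall>i j. \<not> (1 \<le> j \<and> j \<le> i \<and> i \<le> n) \<longrightarrow> d i j = NWNE)}"

definition row_sum :: "(nat \<Rightarrow> nat \<Rightarrow> int) \<Rightarrow> nat \<Rightarrow> int" where
  "row_sum m i = (\<Sum>j = 1..i. m i j)"

definition arrow_count :: "nat \<Rightarrow> (nat \<Rightarrow> nat \<Rightarrow> arrow) \<Rightarrow> arrow \<Rightarrow> nat" where
  "arrow_count n d a = card {(i, j). 1 \<le> j \<and> j \<le> i \<and> i \<le> n \<and> d i j = a}"

definition arrow_count_row :: "nat \<Rightarrow> (nat \<Rightarrow> nat \<Rightarrow> arrow) \<Rightarrow> arrow \<Rightarrow> nat" where
  "arrow_count_row i d a = card {j. 1 \<le> j \<and> j \<le> i \<and> d i j = a}"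

definition W :: "'a::field \<Rightarrow> 'a \<Rightarrow> 'a \<Rightarrow> (nat \<Rightarrow> 'a) \<Rightarrow> nat \<Rightarrow> (nat \<Rightarrow> nat \<Rightarrow> int)
                  \<Rightarrow> (nat \<Rightarrow> nat \<Rightarrow> arrow) \<Rightarrow> 'a" where
  "W u v w X n m d =
     u ^ arrow_count n d NE * v ^ arrow_count n d NW * w ^ arrow_count n d NWNE *
     (\<Prod>i = 1..n. X i powi (row_sum m i - row_sum m (i-1)
                      + int (arrow_count_row i d NE) - int (arrow_count_row i d NW)))"

text \<open>Special / left-leaning / right-leaning counts of row i (meaningful for i < n; row 0 gives 0).\<close>
definition special_count :: "(nat \<Rightarrow> nat \<Rightarrow> int) \<Rightarrow> nat \<Rightarrow> nat" where
  "special_count m i = card {j. 1 \<le> j \<and> j \<le> i \<and> m (i+1) j < m i j \<and> m i j < m (i+1) (j+1)}"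

definition left_count :: "(nat \<Rightarrow> nat \<Rightarrow> int) \<Rightarrow> nat \<Rightarrow> nat" where
  "left_count m i = card {j. 1 \<le> j \<and> j \<le> i \<and> m i j = m (i+1) j}"

definition right_count :: "(nat \<Rightarrow> nat \<Rightarrow> int) \<Rightarrow> nat \<Rightarrow> nat" where
  "right_count m i = card {j. 1 \<le> j \<and> j \<le> i \<and> m i j = m (i+1) (j+1)}"

definition d_exp :: "(nat \<Rightarrow> nat \<Rightarrow> int) \<Rightarrow> nat \<Rightarrow> int" where
  "d_exp m i = row_sum m i - row_sum m (i-1) + int (right_count m (i-1)) - int (left_count m (i-1))"

definition W0 :: "'a::field \<Rightarrow> 'a \<Rightarrow> 'a \<Rightarrow> (nat \<Rightarrow> 'a) \<Rightarrow> nat \<Rightarrow> (nat \<Rightarrow> nat \<Rightarrow> int) \<Rightarrow> 'a" where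
  "W0 u v w X n m =
     u ^ (\<Sum>i = 1..<n. right_count m i) * v ^ (\<Sum>i = 1..<n. left_count m i) *
     (\<Prod>i = 1..n. X i powi d_exp m i *
        (w + u * X i + v * inverse (X i)) ^ special_count m (i-1))"

end

theory Submission imports Defs "HOL-Library.FuncSet" begin
lemma UNIV_arrow: "(UNIV :: arrow set) = {NW, NE, NWNE}"
  using arrow.exhaust by auto

lemma prod_if_const:
  assumes "finite A"
  shows "(\<Prod>x\<in>A. if P x then (c::'a::comm_monoid_mult) else 1) = c ^ card {x\<in>A. P x}"
proof -
  have "(\<Prod>x\<in>A. if P x then c else 1) = (\<Prod>x\<in>{x\<in>A. P x}. c)"
    using assms by (simp add: prod.inter_filter[symmetric])
  then show ?thesis by simp
qed

lemma prod_three: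
  assumes "finite A" and "\<And>x. x \<in> A \<Longrightarrow> \<not> (P x \<and> Q x)"
  shows "(\<Prod>x\<in>A. if P x then (a::'a::comm_monoid_mult) else if Q x then b else c)
     = a ^ card {x\<in>A. P x} * b ^ card {x\<in>A. Q x} * c ^ card {x\<in>A. \<not> P x \<and> \<not> Q x}"
proof -
  have "(\<Prod>x\<in>A. if P x then a else if Q x then b else c) =
     (\<Prod>x\<in>A. (if P x then a else 1) * (if Q x then b else 1) * (if \<not> P x \<and> \<not> Q x then c else 1))"
    using assms(2) by (intro prod.cong) auto
  also have "\<dots> = a ^ card {x\<in>A. P x} * b ^ card {x\<in>A. Q x} * c ^ card {x\<in>A. \<not> P x \<and> \<not> Q x}"
    using assms(1) by (simp add: prod.distrib prod_if_const)
  finally show ?thesis .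
qed

lemma sum_shift: "f 0 = (0::nat) \<Longrightarrow> (\<Sum>i = 1..(n::nat). f (i - 1)) = (\<Sum>i = 1..<n. f i)"
  by (induction n) (auto simp: Suc_le_eq)

lemma prod_shift: "(\<Prod>i = 1..n. (c::'a::comm_monoid_mult) ^ f (i - 1)) = c ^ (\<Sum>i = 1..n. f (i - 1))"
  by (simp add: power_sum)
lemma W_factor:
  fixes u v w :: "'a::field" and X :: "nat \<Rightarrow> 'a"
  assumes X: "\<forall>i\<in>{1..n}. X i \<noteq> 0"
  defines "I \<equiv> {(i,j). 1 \<le> j \<and> j \<le> i \<and> i \<le> n} :: (nat \<times> nat) set"
  shows "W u v w X n m d = (\<Prod>i = 1..n. X i powi (row_sum m i - row_sum m (i-1))) *
     (\<Prod>p\<in>I. (case d (fst p) (snd p) of NE \<Rightarrow> u * X (fst p) | NW \<Rightarrow> v * inverse (X (fst p)) | NWNE \<Rightarrow> w))"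
proof -
  have IS: "I = Sigma {1..n} (\<lambda>i. {1..i})" unfolding I_def by auto
  have fI: "finite I" unfolding IS by auto
  have cnt: "arrow_count n d a = card {p\<in>I. d (fst p) (snd p) = a}" for a
    unfolding arrow_count_def I_def by (rule arg_cong[where f=card]) auto
  have P: "u ^ arrow_count n d a = (\<Prod>p\<in>I. if d (fst p) (snd p) = a then u else 1)" for a and u :: 'a
    unfolding cnt using fI by (simp add: prod_if_const)
  have rowP: "(\<Prod>i=1..n. Y i ^ arrow_count_row i d a) = (\<Prod>p\<in>I. if d (fst p) (snd p) = a then Y (fst p) else 1)" for a and Y :: "nat \<Rightarrow> 'a"
  proof -
    have "(\<Prod>i=1..n. Y i ^ arrow_count_row i d a) = (\<Prod>i=1..n. \<Prod>j=1..i. if d i j = a then Y i else 1)"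
      by (intro prod.cong refl) (simp add: prod_if_const arrow_count_row_def)
    also have "\<dots> = (\<Prod>(i,j)\<in>I. if d i j = a then Y i else 1)"
      unfolding IS by (rule prod.Sigma) auto
    also have "\<dots> = (\<Prod>p\<in>I. if d (fst p) (snd p) = a then Y (fst p) else 1)"
      by (simp add: case_prod_beta)
    finally show ?thesis .
  qed
  have Xs: "X i powi (row_sum m i - row_sum m (i-1) + int (arrow_count_row i d NE) - int (arrow_count_row i d NW))
     = X i powi (row_sum m i - row_sum m (i-1)) * (X i ^ arrow_count_row i d NE * inverse (X i) ^ arrow_count_row i d NW)"
    if "i \<in> {1..n}" for i
    using X that by (simp add: power_int_add power_int_diff divide_inverse power_inverse)
  have "W u v w X n m d = u ^ arrow_count n d NE * v ^ arrow_count n d NW * w ^ arrow_count n d NWNE *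
     ((\<Prod>i = 1..n. X i powi (row_sum m i - row_sum m (i-1))) *
      ((\<Prod>i = 1..n. X i ^ arrow_count_row i d NE) * (\<Prod>i = 1..n. inverse (X i) ^ arrow_count_row i d NW)))"
  proof -
    have "(\<Prod>i = 1..n. X i powi (row_sum m i - row_sum m (i-1) + int (arrow_count_row i d NE) - int (arrow_count_row i d NW)))
      = (\<Prod>i = 1..n. X i powi (row_sum m i - row_sum m (i-1)) * (X i ^ arrow_count_row i d NE * inverse (X i) ^ arrow_count_row i d NW))"
      by (rule prod.cong[OF refl Xs])
    also have "\<dots> = (\<Prod>i = 1..n. X i powi (row_sum m i - row_sum m (i-1))) *
      ((\<Prod>i = 1..n. X i ^ arrow_count_row i d NE) * (\<Prod>i = 1..n. inverse (X i) ^ arrow_count_row i d NW))"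
      by (simp only: prod.distrib)
    finally show ?thesis unfolding W_def by simp
  qed
  also have "\<dots> = (\<Prod>i = 1..n. X i powi (row_sum m i - row_sum m (i-1))) *
     ((\<Prod>p\<in>I. if d (fst p) (snd p) = NE then u else 1) * (\<Prod>p\<in>I. if d (fst p) (snd p) = NW then v else 1) *
      (\<Prod>p\<in>I. if d (fst p) (snd p) = NWNE then w else 1) *
      (\<Prod>p\<in>I. if d (fst p) (snd p) = NE then X (fst p) else 1) *
      (\<Prod>p\<in>I. if d (fst p) (snd p) = NW then inverse (X (fst p)) else 1))"
    by (simp only: P rowP[of X] rowP[of "\<lambda>i. inverse (X i)"]) (simp add: ac_simps)
  also have "\<dots> = (\<Prod>i = 1..n. X i powi (row_sum m i - row_sum m (i-1))) *
     (\<Prod>p\<in>I. (case d (fst p) (snd p) of NE \<Rightarrow> u * X (fst p) | NW \<Rightarrow> v * inverse (X (fst p)) | NWNE \<Rightarrow> w))"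
    by (simp only: prod.distrib[symmetric]) (intro arg_cong[where f="\<lambda>z. _ * z"] prod.cong refl; simp split: arrow.split)
  finally show ?thesis .
qed
lemma card_partition3:
  assumes "finite A" and "\<And>x. x \<in> A \<Longrightarrow> (P x \<or> Q x \<or> R x) \<and> \<not> (P x \<and> Q x) \<and> \<not> (P x \<and> R x) \<and> \<not> (Q x \<and> R x)"
  shows "card {x\<in>A. P x} + card {x\<in>A. Q x} + card {x\<in>A. R x} = card A"
proof -
  have "A = ({x\<in>A. P x} \<union> {x\<in>A. Q x}) \<union> {x\<in>A. R x}" using assms(2) by blast
  hence "card A = card ({x\<in>A. P x} \<union> {x\<in>A. Q x} \<union> {x\<in>A. R x})" by simp
  also have "\<dots> = card ({x\<in>A. P x} \<union> {x\<in>A. Q x}) + card {x\<in>A. R x}"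
    by (rule card_Un_disjoint) (use assms in auto)
  also have "card ({x\<in>A. P x} \<union> {x\<in>A. Q x}) = card {x\<in>A. P x} + card {x\<in>A. Q x}"
    using assms by (intro card_Un_disjoint) auto
  finally show ?thesis by simp
qed

theorem mainTheorem7:
  fixes u v w :: "'a::field" and X :: "nat \<Rightarrow> 'a" and n :: nat and m :: "nat \<Rightarrow> nat \<Rightarrow> int"
  assumes "\<forall>i\<in>{1..n}. X i \<noteq> 0"
    and "monotone_triangle n m"
    and "\<forall>j. 1 \<le> j \<and> j < n \<longrightarrow> m n j < m n (j+1)"
  shows "(\<Sum>d\<in>arrowings n m. W u v w X n m d)
           = (\<Prod>i = 1..n. u * X i + v * inverse (X i) + w) * W0 u v w X n m"
proof -
  note X = assms(1)
  have strict: "m i j < m i (j+1)" if "1 \<le> j" "j < i" "i \<le> n" for i j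
    using assms(2) that unfolding monotone_triangle_def by blast
  have weak: "m (i+1) j \<le> m i j \<and> m i j \<le> m (i+1) (j+1)" if "1 \<le> j" "j \<le> i" "i < n" for i j
    using assms(2) that unfolding monotone_triangle_def by blast
  define I :: "(nat \<times> nat) set" where "I = {(i,j). 1 \<le> j \<and> j \<le> i \<and> i \<le> n}"
  define P where "P i j \<longleftrightarrow> 2 \<le> j \<and> m i j = m (i-1) (j-1)" for i j
  define Q where "Q i j \<longleftrightarrow> j + 1 \<le> i \<and> m i j = m (i-1) j" for i j
  define A :: "nat \<times> nat \<Rightarrow> arrow set" where "A p = {a. (P (fst p) (snd p) \<longrightarrow> a = NE) \<and> (Q (fst p) (snd p) \<longrightarrow> a = NW)}" for p
  define g :: "nat \<times> nat \<Rightarrow> arrow \<Rightarrow> 'a" where "g p a = (case a of NE \<Rightarrow> u * X (fst p) | NW \<Rightarrow> v * inverse (X (fst p)) | NWNE \<Rightarrow> w)" for p a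
  define C where "C = (\<Prod>i = 1..n. X i powi (row_sum m i - row_sum m (i-1)))"
  define S where "S i = u * X i + v * inverse (X i) + w" for i
  have IS: "I = Sigma {1..n} (\<lambda>i. {1..i})" unfolding I_def by auto
  have fI: "finite I" unfolding IS by auto
  have PQ: "\<not> (P i j \<and> Q i j)" if "(i,j) \<in> I" for i j
  proof
    assume "P i j \<and> Q i j"
    hence "m (i-1) (j-1) = m (i-1) (j-1+1)" "2 \<le> j" "j+1 \<le> i" unfolding P_def Q_def by auto
    moreover have "m (i-1) (j-1) < m (i-1) (j-1+1)"
      using that \<open>2 \<le> j\<close> \<open>j+1 \<le> i\<close> unfolding I_def by (intro strict) auto
    ultimately show False by simp
  qed
  have arr: "arrowings n m = {d. (\<forall>i j. (i,j) \<in> I \<longrightarrow> d i j \<in> A (i,j)) \<and> (\<forall>i j. (i,j) \<notin> I \<longrightarrow> d i j = NWNE)}"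
    unfolding arrowings_def arrow_compatible_def I_def A_def P_def Q_def by auto
  have step1: "(\<Sum>d\<in>arrowings n m. W u v w X n m d) = C * (\<Sum>e\<in>PiE I A. \<Prod>p\<in>I. g p (e p))"
  proof -
    have "(\<Sum>d\<in>arrowings n m. W u v w X n m d) = (\<Sum>d\<in>arrowings n m. C * (\<Prod>p\<in>I. g p (d (fst p) (snd p))))"
      unfolding C_def g_def I_def using W_factor[OF X] by simp
    also have "\<dots> = C * (\<Sum>d\<in>arrowings n m. \<Prod>p\<in>I. g p (d (fst p) (snd p)))"
      by (simp add: sum_distrib_left)
    also have "(\<Sum>d\<in>arrowings n m. \<Prod>p\<in>I. g p (d (fst p) (snd p))) = (\<Sum>e\<in>PiE I A. \<Prod>p\<in>I. g p (e p))"
    proof (rule sum.reindex_bij_witness[of _ "\<lambda>e i j. if (i,j)\<in>I then e (i,j) else NWNE" "\<lambda>d p. if p\<in>I then d (fst p) (snd p) else undefined"])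
      fix d assume "d \<in> arrowings n m"
      thus "(\<lambda>i j. if (i,j)\<in>I then (if (i,j) \<in> I then d (fst (i,j)) (snd (i,j)) else undefined) else NWNE) = d"
        unfolding arr by (auto intro!: ext)
      show "(\<lambda>p. if p\<in>I then d (fst p) (snd p) else undefined) \<in> PiE I A"
        using \<open>d \<in> arrowings n m\<close> unfolding arr PiE_def extensional_def by auto
      show "(\<Prod>p\<in>I. g p (if p\<in>I then d (fst p) (snd p) else undefined)) = (\<Prod>p\<in>I. g p (d (fst p) (snd p)))"
        by (intro prod.cong) auto
    next
      fix e assume e: "e \<in> PiE I A"
      thus "(\<lambda>p. if p\<in>I then (\<lambda>i j. if (i,j)\<in>I then e (i,j) else NWNE) (fst p) (snd p) else undefined) = e"
        unfolding PiE_def extensional_def by (auto intro!: ext)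
      show "(\<lambda>i j. if (i,j)\<in>I then e (i,j) else NWNE) \<in> arrowings n m"
        using e unfolding arr PiE_def by auto
    qed
    finally show ?thesis .
  qed
  have finU: "finite (UNIV :: arrow set)" by (simp add: UNIV_arrow)
  have finA: "finite (A p)" for p by (rule finite_subset[OF subset_UNIV finU])
  have step2: "(\<Sum>e\<in>PiE I A. \<Prod>p\<in>I. g p (e p)) = (\<Prod>p\<in>I. \<Sum>a\<in>A p. g p a)"
    by (rule prod_sum_PiE[symmetric]) (use fI finA in auto)
  define h where "h i j = (if P i j then u * X i else if Q i j then v * inverse (X i) else S i)" for i j
  have step3: "(\<Prod>p\<in>I. \<Sum>a\<in>A p. g p a) = (\<Prod>i=1..n. \<Prod>j=1..i. h i j)"
  proof -
    have "(\<Prod>p\<in>I. \<Sum>a\<in>A p. g p a) = (\<Prod>(i,j)\<in>I. h i j)"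
    proof (rule prod.cong[OF refl])
      fix p assume p: "p \<in> I"
      obtain i j where pij: "p = (i,j)" by (cases p)
      have nPQ: "\<not> (P i j \<and> Q i j)" using PQ p pij by blast
      show "(\<Sum>a\<in>A p. g p a) = (case p of (i,j) \<Rightarrow> h i j)"
      proof (cases "P i j")
        case True
        hence "A p = {NE}" using nPQ unfolding A_def pij by auto
        thus ?thesis using True unfolding h_def g_def pij by simp
      next
        case False
        show ?thesis
        proof (cases "Q i j")
          case True
          hence "A p = {NW}" using False unfolding A_def pij by auto
          thus ?thesis using True False unfolding h_def g_def pij by simp
        next
          case False2: False
          hence "A p = {NW, NE, NWNE}" using False unfolding A_def pij by (auto simp: UNIV_arrow[symmetric])
          thus ?thesis using False2 False unfolding h_def g_def pij S_def by (simp add: ac_simps)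
        qed
      qed
    qed
    also have "\<dots> = (\<Prod>i=1..n. \<Prod>j=1..i. h i j)"
      unfolding IS by (rule prod.Sigma[symmetric]) auto
    finally show ?thesis .
  qed
  have row: "(\<Prod>j=1..i. h i j) = (u * X i) ^ right_count m (i-1) * (v * inverse (X i)) ^ left_count m (i-1)
      * S i ^ (special_count m (i-1) + 1)" if i: "i \<in> {1..n}" for i
  proof -
    have i1: "i - 1 + 1 = i" using i by auto
    have "(\<Prod>j=1..i. h i j) = (u * X i) ^ card {j\<in>{1..i}. P i j} * (v * inverse (X i)) ^ card {j\<in>{1..i}. Q i j}
       * S i ^ card {j\<in>{1..i}. \<not> P i j \<and> \<not> Q i j}"
      unfolding h_def by (rule prod_three) (use PQ i in \<open>auto simp: I_def\<close>)
    moreover have cP: "card {j\<in>{1..i}. P i j} = right_count m (i-1)"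
    proof -
      have "{j\<in>{1..i}. P i j} = Suc ` {k. 1 \<le> k \<and> k \<le> i - 1 \<and> m (i-1) k = m (i-1+1) (k+1)}"
      proof (rule set_eqI, rule iffI)
        fix j assume "j \<in> {j\<in>{1..i}. P i j}"
        hence j: "2 \<le> j" "j \<le> i" "m i j = m (i-1) (j-1)" unfolding P_def by auto
        hence "j - 1 \<in> {k. 1 \<le> k \<and> k \<le> i - 1 \<and> m (i-1) k = m (i-1+1) (k+1)}" using i1 by auto
        moreover have "j = Suc (j - 1)" using j by auto
        ultimately show "j \<in> Suc ` {k. 1 \<le> k \<and> k \<le> i - 1 \<and> m (i-1) k = m (i-1+1) (k+1)}" by blast
      next
        fix j assume "j \<in> Suc ` {k. 1 \<le> k \<and> k \<le> i - 1 \<and> m (i-1) k = m (i-1+1) (k+1)}"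
        then obtain k where "j = Suc k" "1 \<le> k" "k \<le> i - 1" "m (i-1) k = m (i-1+1) (k+1)" by blast
        thus "j \<in> {j\<in>{1..i}. P i j}" unfolding P_def using i1 by auto
      qed
      thus ?thesis unfolding right_count_def by (simp add: card_image)
    qed
    moreover have cQ: "card {j\<in>{1..i}. Q i j} = left_count m (i-1)"
      unfolding left_count_def Q_def using i1 by (intro arg_cong[where f=card]) auto
    moreover have p1: "card {j\<in>{1..i}. P i j} + card {j\<in>{1..i}. Q i j} + card {j\<in>{1..i}. \<not> P i j \<and> \<not> Q i j} = i"
      using card_partition3[of "{1..i}" "P i" "Q i" "\<lambda>j. \<not> P i j \<and> \<not> Q i j"] PQ i by (auto simp: I_def)
    moreover have p2: "special_count m (i-1) + left_count m (i-1) + right_count m (i-1) = i - 1"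
    proof -
      have e1: "special_count m (i-1) = card {k\<in>{1..i-1}. m i k < m (i-1) k \<and> m (i-1) k < m i (k+1)}"
        unfolding special_count_def using i1 by (intro arg_cong[where f=card]) auto
      have e2: "left_count m (i-1) = card {k\<in>{1..i-1}. m (i-1) k = m i k}"
        unfolding left_count_def using i1 by (intro arg_cong[where f=card]) auto
      have e3: "right_count m (i-1) = card {k\<in>{1..i-1}. m (i-1) k = m i (k+1)}"
        unfolding right_count_def using i1 by (intro arg_cong[where f=card]) auto
      have "card {k\<in>{1..i-1}. m i k < m (i-1) k \<and> m (i-1) k < m i (k+1)} + card {k\<in>{1..i-1}. m (i-1) k = m i k}
         + card {k\<in>{1..i-1}. m (i-1) k = m i (k+1)} = card {1..i-1}"
      proof (rule card_partition3)
        fix k assume k: "k \<in> {1..i-1}"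
        have "m (i-1+1) k \<le> m (i-1) k \<and> m (i-1) k \<le> m (i-1+1) (k+1)"
          using k i by (intro weak) auto
        hence a: "m i k \<le> m (i-1) k" "m (i-1) k \<le> m i (k+1)" using i1 by auto
        have "m i k < m i (k+1)" using k i by (intro strict) auto
        thus "(m i k < m (i-1) k \<and> m (i-1) k < m i (k+1) \<or> m (i-1) k = m i k \<or> m (i-1) k = m i (k+1)) \<and>
          \<not> ((m i k < m (i-1) k \<and> m (i-1) k < m i (k+1)) \<and> m (i-1) k = m i k) \<and>
          \<not> ((m i k < m (i-1) k \<and> m (i-1) k < m i (k+1)) \<and> m (i-1) k = m i (k+1)) \<and>
          \<not> (m (i-1) k = m i k \<and> m (i-1) k = m i (k+1))" using a by auto
      qed simp
      thus ?thesis using e1 e2 e3 by simp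
    qed
    moreover have "card {j\<in>{1..i}. \<not> P i j \<and> \<not> Q i j} = special_count m (i-1) + 1"
      using cP cQ p1 p2 i1 by linarith
    ultimately show ?thesis by simp
  qed
  have r0: "right_count m 0 = 0" unfolding right_count_def by simp
  have l0: "left_count m 0 = 0" unfolding left_count_def by simp
  have uR: "u ^ (\<Sum>i = 1..<n. right_count m i) = (\<Prod>i=1..n. u ^ right_count m (i-1))"
    unfolding power_sum[symmetric] sum_shift[of "right_count m" n, OF r0] ..
  have vL: "v ^ (\<Sum>i = 1..<n. left_count m i) = (\<Prod>i=1..n. v ^ left_count m (i-1))"
    unfolding power_sum[symmetric] sum_shift[of "left_count m" n, OF l0] ..
  have Xd: "X i powi d_exp m i = X i powi (row_sum m i - row_sum m (i-1)) * (X i ^ right_count m (i-1) * inverse (X i) ^ left_count m (i-1))"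
    if "i \<in> {1..n}" for i
    using X that unfolding d_exp_def by (simp add: power_int_add power_int_diff divide_inverse power_inverse)
  have "(\<Sum>d\<in>arrowings n m. W u v w X n m d) = C * (\<Prod>i=1..n. \<Prod>j=1..i. h i j)"
    using step1 step2 step3 by simp
  also have "\<dots> = (\<Prod>i=1..n. X i powi (row_sum m i - row_sum m (i-1)) * ((u * X i) ^ right_count m (i-1) * (v * inverse (X i)) ^ left_count m (i-1)
      * S i ^ (special_count m (i-1) + 1)))"
    unfolding C_def prod.distrib[symmetric] by (intro prod.cong refl arg_cong2[where f="(*)"] row)
  also have "\<dots> = (\<Prod>i=1..n. S i * (u ^ right_count m (i-1) * (v ^ left_count m (i-1) *
       (X i powi d_exp m i * S i ^ special_count m (i-1)))))"
    by (intro prod.cong refl) (simp add: Xd power_mult_distrib mult_ac)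
  also have "\<dots> = (\<Prod>i = 1..n. u * X i + v * inverse (X i) + w) * W0 u v w X n m"
    unfolding W0_def uR vL S_def prod.distrib by (simp add: mult_ac add_ac)
  finally show ?thesis .
qed
end
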